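(* Let $q\in\mathbb{C}$, $|q|<1$. For all $u,v\in\mathfrak{A}^0_{\mathrm{G}}$, $$\mathfrak{z}_q[u*_{\mathrm{G}}v]=\mathfrak{z}_q[u\sqcup\!\sqcup v]=\mathfrak{z}_q[u]\,\mathfrak{z}_q[v].$$
   Context: Let $Y_{\mathrm{G}}=\{z_{t,s}:t,s\in\mathbb{Z},\,0\le t\le s\}$ and $\mathfrak{A}_{\mathrm{G}}$ the free noncommutative $\mathbb{Q}$-algebra on $Y_{\mathrm{G}}$ (unit $\mathbf{1}$). $\mathfrak{A}^0_{\mathrm{G}}$ is the span of words $z_{t_1,s_1}\cdots z_{t_d,s_d}$ ($d\ge1$) with $t_1\ge1$. The stuffle $*_{\mathrm{G}}$ is bilinear with $\mathbf{1}*u=u*\mathbf{1}=u$ and $(z_{t,s}u)*(z_{t',s'}v)=z_{t,s}(u*z_{t',s'}v)+z_{t',s'}(z_{t,s}u*v)+z_{t+t',s+s'}(u*v)$. Map $\mathfrak{A}_{\mathrm{G}}$ into $\mathbb{Q}\langle\pi,y\rangle$ by the algebra homomorphism $z_{t,s}\mapsto\rho^t\pi^{s-t}y$, $\rho=\pi-\mathbf{1}$; elements of $\mathfrak{A}_{\mathrm{G}}$ are identified with their images. The shuffle $\sqcup\!\sqcup$ on $\mathbb{Q}\langle\pi,y\rangle$: bilinear, $\mathbf{1}\sqcup\!\sqcup u=u\sqcup\!\sqcup\mathbf{1}=u$, $(yu)\sqcup\!\sqcup v=u\sqcup\!\sqcup(yv)=y(u\sqcup\!\sqcup v)$, $\pi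 u\sqcup\!\sqcup\pi v=\pi(u\sqcup\!\sqcup\pi v)+\pi(\pi u\sqcup\!\sqcup v)-\pi(u\sqcup\!\sqcup v)$. Realization: let $\Phi$ be the algebra homomorphism from $\mathbb{Q}\langle\pi,y\rangle$ to operators on power series in $t$ with $\Phi(\pi)=\mathbf{P}$, $\mathbf{P}[f](t)=\sum_{k\ge0}f(q^kt)$, and $\Phi(y)=$ multiplication by $t/(1-t)$; for $W$ in the image of $\mathfrak{A}^0_{\mathrm{G}}$ set $\mathfrak{z}_q[W]=\Phi(W)[1]$ evaluated at $t=1$. (For a word, $\mathfrak{z}_q[z_{t_1,s_1}\cdots z_{t_d,s_d}]=\sum_{k_1>\dots>k_d>0}\prod_j q^{k_jt_j}(1-q^{k_j})^{-s_j}$.) *)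

theory Defs
  imports Complex_Main "HOL-Computational_Algebra.Formal_Power_Series"
begin

(* Formal Q-linear combinations of words, represented as lists of (word, coefficient). *)
type_synonym 'w fsum = "('w \<times> rat) list"

definition fscale :: "rat \<Rightarrow> 'w fsum \<Rightarrow> 'w fsum" where
  "fscale c U = map (\<lambda>(w, a). (w, c * a)) U"

definition fprefix :: "'l \<Rightarrow> 'l list fsum \<Rightarrow> 'l list fsum" where
  "fprefix x U = map (\<lambda>(w, a). (x # w, a)) U"

definition fmul :: "'l list fsum \<Rightarrow> 'l list fsum \<Rightarrow> 'l list fsum" where
  "fmul U V = concat (map (\<lambda>(w, a). map (\<lambda>(w', b). (w @ w', a * b)) V) U)"

primrec fpow :: "'l list fsum \<Rightarrow> nat \<Rightarrow> 'l list fsum" where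
  "fpow U 0 = [([], 1)]"
| "fpow U (Suc n) = fmul U (fpow U n)"

definition bilin :: "('v \<Rightarrow> 'v \<Rightarrow> 'w fsum) \<Rightarrow> 'v fsum \<Rightarrow> 'v fsum \<Rightarrow> 'w fsum" where
  "bilin f U V = concat (map (\<lambda>(w, a). concat (map (\<lambda>(w', b). fscale (a * b) (f w w')) V)) U)"

(* ---------- the algebra A_G : letters z_{t,s} encoded as pairs (t,s) ---------- *)
type_synonym zword = "(nat \<times> nat) list"

definition valid_zword :: "zword \<Rightarrow> bool" where
  "valid_zword w \<longleftrightarrow> (\<forall>(t, s) \<in> set w. t \<le> s)"

definition A0 :: "zword fsum set" where
  "A0 = {U. \<forall>(w, a) \<in> set U. valid_zword w \<and> w \<noteq> [] \<and> fst (hd w) \<ge> 1}"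

fun stuffle_w :: "zword \<Rightarrow> zword \<Rightarrow> zword fsum" where
  "stuffle_w [] v = [(v, 1)]"
| "stuffle_w u [] = [(u, 1)]"
| "stuffle_w (a # u) (b # v) =
     fprefix a (stuffle_w u (b # v)) @ fprefix b (stuffle_w (a # u) v)
     @ fprefix (fst a + fst b, snd a + snd b) (stuffle_w u v)"

definition stuffle :: "zword fsum \<Rightarrow> zword fsum \<Rightarrow> zword fsum" where
  "stuffle = bilin stuffle_w"

datatype pyl = Pi | Y

fun shuffle_w :: "pyl list \<Rightarrow> pyl list \<Rightarrow> pyl list fsum" where
  "shuffle_w [] v = [(v, 1)]"
| "shuffle_w u [] = [(u, 1)]"
| "shuffle_w (Y # u) v = fprefix Y (shuffle_w u v)"
| "shuffle_w (Pi # u) (Y # v) = fprefix Y (shuffle_w (Pi # u) v)"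
| "shuffle_w (Pi # u) (Pi # v) =
     fprefix Pi (shuffle_w u (Pi # v)) @ fprefix Pi (shuffle_w (Pi # u) v)
     @ fscale (-1) (fprefix Pi (shuffle_w u v))"

definition shuffle :: "pyl list fsum \<Rightarrow> pyl list fsum \<Rightarrow> pyl list fsum" where
  "shuffle = bilin shuffle_w"

definition rho :: "pyl list fsum" where
  "rho = [([Pi], 1), ([], -1)]"

definition img_letter :: "nat \<times> nat \<Rightarrow> pyl list fsum" where
  "img_letter ts = fmul (fpow rho (fst ts)) (fmul (fpow [([Pi], 1)] (snd ts - fst ts)) [([Y], 1)])"

definition img_word :: "zword \<Rightarrow> pyl list fsum" where
  "img_word w = foldr (\<lambda>l acc. fmul (img_letter l) acc) w [([], 1)]"

definition img :: "zword fsum \<Rightarrow> pyl list fsum" where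
  "img U = concat (map (\<lambda>(w, a). fscale a (img_word w)) U)"

(* P[f](t) = sum_k f(q^k t), acting on power series: t^n |-> t^n/(1-q^n) *)
definition Pop :: "complex \<Rightarrow> complex fps \<Rightarrow> complex fps" where
  "Pop q f = Abs_fps (\<lambda>n. fps_nth f n / (1 - q ^ n))"

definition Yop :: "complex fps \<Rightarrow> complex fps" where
  "Yop f = fps_X * inverse (1 - fps_X) * f"

primrec Phi_letter :: "complex \<Rightarrow> pyl \<Rightarrow> complex fps \<Rightarrow> complex fps" where
  "Phi_letter q Pi f = Pop q f"
| "Phi_letter q Y f = Yop f"

primrec Phi_word :: "complex \<Rightarrow> pyl list \<Rightarrow> complex fps \<Rightarrow> complex fps" where
  "Phi_word q [] f = f"
| "Phi_word q (x # w) f = Phi_letter q x (Phi_word q w f)"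

definition Phi_one :: "complex \<Rightarrow> pyl list fsum \<Rightarrow> complex fps" where
  "Phi_one q W = (\<Sum>(w, a) \<leftarrow> W. fps_const (of_rat a) * Phi_word q w 1)"

definition zq :: "complex \<Rightarrow> pyl list fsum \<Rightarrow> complex" where
  "zq q W = (\<Sum>n. fps_nth (Phi_one q W) n)"

end

theory Submission imports Defs begin
unbundle fps_syntax

lemma Pop_add: "Pop q (f + g) = Pop q f + Pop q g"
  by (simp add: Pop_def fps_eq_iff add_divide_distrib)
lemma Pop_cmult: "Pop q (fps_const c * f) = fps_const c * Pop q f"
  by (simp add: Pop_def fps_eq_iff)
lemma Pop_zero: "Pop q 0 = 0"
  by (simp add: Pop_def fps_eq_iff)
lemma Yop_add: "Yop (f + g) = Yop f + Yop g"
  by (simp add: Yop_def algebra_simps)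
lemma Yop_cmult: "Yop (fps_const c * f) = fps_const c * Yop f"
  by (simp add: Yop_def algebra_simps)

lemma Phi_letter_add: "Phi_letter q x (f + g) = Phi_letter q x f + Phi_letter q x g"
  by (cases x) (auto simp: Pop_add Yop_add)
lemma Phi_letter_cmult: "Phi_letter q x (fps_const c * f) = fps_const c * Phi_letter q x f"
  by (cases x) (auto simp: Pop_cmult Yop_cmult)
lemma Phi_letter_zero: "Phi_letter q x 0 = 0"
  by (cases x) (auto simp: Pop_zero Yop_def)

lemma Phi_word_add: "Phi_word q w (f + g) = Phi_word q w f + Phi_word q w g"
  by (induct w) (auto simp: Phi_letter_add)
lemma Phi_word_cmult: "Phi_word q w (fps_const c * f) = fps_const c * Phi_word q w f"
  by (induct w) (auto simp: Phi_letter_cmult)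
lemma Phi_word_zero: "Phi_word q w 0 = 0"
  by (induct w) (auto simp: Phi_letter_zero)
lemma Phi_word_append: "Phi_word q (w @ w') f = Phi_word q w (Phi_word q w' f)"
  by (induct w) auto

definition Phi_op :: "complex \<Rightarrow> pyl list fsum \<Rightarrow> complex fps \<Rightarrow> complex fps" where
  "Phi_op q W f = (\<Sum>(w, a) \<leftarrow> W. fps_const (of_rat a) * Phi_word q w f)"

lemma Phi_one_op: "Phi_one q W = Phi_op q W 1"
  by (simp add: Phi_one_def Phi_op_def)

lemma Phi_op_Nil[simp]: "Phi_op q [] f = 0" by (simp add: Phi_op_def)
lemma Phi_op_Cons[simp]: "Phi_op q ((w,a) # W) f = fps_const (of_rat a) * Phi_word q w f + Phi_op q W f"
  by (simp add: Phi_op_def)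
lemma Phi_op_append[simp]: "Phi_op q (U @ V) f = Phi_op q U f + Phi_op q V f"
  by (simp add: Phi_op_def)
lemma Phi_op_concat: "Phi_op q (concat Ws) f = (\<Sum>W \<leftarrow> Ws. Phi_op q W f)"
  by (induct Ws) auto
lemma Phi_op_fscale: "Phi_op q (fscale c U) f = fps_const (of_rat c) * Phi_op q U f"
  by (induct U) (auto simp: fscale_def of_rat_mult algebra_simps simp flip: fps_const_mult)
lemma Phi_op_fprefix: "Phi_op q (fprefix x U) f = Phi_letter q x (Phi_op q U f)"
  by (induct U) (auto simp: fprefix_def Phi_letter_add Phi_letter_cmult Phi_letter_zero)

lemma Phi_word_Phi_op: "Phi_word q w (Phi_op q V f) = Phi_op q (map (\<lambda>(w', b). (w @ w', b)) V) f"
  by (induct V) (auto simp: Phi_word_add Phi_word_cmult Phi_word_zero Phi_word_append)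

lemma Phi_op_map_scale: "Phi_op q (map (\<lambda>(w', b). (w @ w', a * b)) V) f
   = fps_const (of_rat a) * Phi_op q (map (\<lambda>(w', b). (w @ w', b)) V) f"
  by (induct V) (auto simp: of_rat_mult algebra_simps simp flip: fps_const_mult)

lemma Phi_op_fmul: "Phi_op q (fmul U V) f = Phi_op q U (Phi_op q V f)"
  by (induct U) (auto simp: fmul_def Phi_op_map_scale Phi_word_Phi_op)

lemma Phi_op_fpow: "Phi_op q (fpow U k) f = (Phi_op q U ^^ k) f"
  by (induct k) (auto simp: Phi_op_fmul)

lemma Phi_op_Pi: "Phi_op q [([Pi], 1)] f = Pop q f" by simp
lemma Phi_op_Y: "Phi_op q [([Y], 1)] f = Yop f" by simp
lemma neg_one_mult_fps: "fps_const (-1) * (f::complex fps) = - f"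
  by (simp add: fps_eq_iff)
lemma Phi_op_rho: "Phi_op q rho f = Pop q f - f"
  by (simp add: rho_def neg_one_mult_fps)

lemma Pop_pow_nth: "((Pop q) ^^ k) f $ n = f $ n / (1 - q ^ n) ^ k"
  by (induct k) (auto simp: Pop_def)

lemma Rho_pow_nth: "((\<lambda>f. Pop q f - f) ^^ k) f $ n = f $ n * (1 / (1 - q ^ n) - 1) ^ k"
  by (induct k) (auto simp: Pop_def algebra_simps)

lemma Yop_nth: "Yop f $ n = (\<Sum>m<n. f $ m)"
proof -
  have "Yop f = fps_X * (f * Abs_fps (\<lambda>n. 1))"
    by (simp add: Yop_def fps_inverse_one_minus_fps_X mult.assoc mult.commute)
  moreover have "(f * Abs_fps (\<lambda>n. 1)) $ m = (\<Sum>i\<le>m. f $ i)" for m :: nat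
    by (simp add: fps_mult_nth atLeast0AtMost sum.atMost_shift)
  ultimately show ?thesis
    apply (cases n) apply simp
    by (simp add: lessThan_Suc_atMost)
qed

definition lam :: "complex \<Rightarrow> nat \<Rightarrow> nat \<Rightarrow> nat \<Rightarrow> complex" where
  "lam q t s n = (1 / (1 - q ^ n) - 1) ^ t / (1 - q ^ n) ^ (s - t)"

lemma letter_nth: "Phi_op q (img_letter (t, s)) f $ n = lam q t s n * (\<Sum>m<n. f $ m)"
  by (simp add: img_letter_def Phi_op_fmul Phi_op_fpow Phi_op_rho[abs_def] Phi_op_Pi[abs_def]
      Rho_pow_nth Pop_pow_nth Yop_nth lam_def)


primrec G :: "complex \<Rightarrow> zword \<Rightarrow> complex fps" where
  "G q [] = 1"
| "G q (a # w) = Abs_fps (\<lambda>n. lam q (fst a) (snd a) n * (\<Sum>m<n. G q w $ m))"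

lemma Phi_op_img_word: "Phi_op q (img_word w) 1 = G q w"
proof (induct w)
  case Nil thus ?case by (simp add: img_word_def)
next
  case (Cons a w)
  have "img_word (a # w) = fmul (img_letter a) (img_word w)" by (simp add: img_word_def)
  hence "Phi_op q (img_word (a # w)) 1 = Phi_op q (img_letter a) (G q w)"
    by (simp add: Phi_op_fmul Cons)
  also have "\<dots> = G q (a # w)"
    by (cases a) (simp add: fps_eq_iff letter_nth)
  finally show ?case .
qed

lemma Phi_one_img: "Phi_one q (img U) = (\<Sum>(w, c) \<leftarrow> U. fps_const (of_rat c) * G q w)"
  unfolding img_def Phi_one_op Phi_op_concat
  by (induct U) (auto simp: Phi_op_fscale Phi_op_img_word)

definition good :: "pyl list \<Rightarrow> bool" where
  "good w \<longleftrightarrow> (w = [] \<or> last w = Y)"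

lemma set_fmul: "(w, c) \<in> set (fmul U V) \<Longrightarrow> \<exists>w1 a w2 b. (w1, a) \<in> set U \<and> (w2, b) \<in> set V \<and> w = w1 @ w2"
  unfolding fmul_def by auto

lemma fmul_goodne1:
  assumes "\<And>w a. (w, a) \<in> set V \<Longrightarrow> w \<noteq> [] \<and> last w = Y"
  shows "(w, c) \<in> set (fmul U V) \<Longrightarrow> w \<noteq> [] \<and> last w = Y"
  using assms set_fmul by (metis append_is_Nil_conv last_appendR)

lemma fmul_goodne2:
  assumes "\<And>w a. (w, a) \<in> set U \<Longrightarrow> w \<noteq> [] \<and> last w = Y" "\<And>w a. (w, a) \<in> set V \<Longrightarrow> good w"
  shows "(w, c) \<in> set (fmul U V) \<Longrightarrow> w \<noteq> [] \<and> last w = Y"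
proof -
  assume "(w, c) \<in> set (fmul U V)"
  then obtain w1 a w2 b where "(w1, a) \<in> set U" "(w2, b) \<in> set V" "w = w1 @ w2" using set_fmul by blast
  thus ?thesis using assms by (cases "w2 = []") (auto simp: good_def)
qed

lemma img_letter_goodne: "(w, c) \<in> set (img_letter l) \<Longrightarrow> w \<noteq> [] \<and> last w = Y"
proof -
  have "\<And>w a. (w, a) \<in> set (fmul (fpow [([Pi], 1)] (snd l - fst l)) [([Y], 1)]) \<Longrightarrow> w \<noteq> [] \<and> last w = Y"
    by (rule fmul_goodne1) auto
  thus "(w, c) \<in> set (img_letter l) \<Longrightarrow> w \<noteq> [] \<and> last w = Y"
    unfolding img_letter_def by (rule fmul_goodne1)
qed

lemma img_word_good: "(w, c) \<in> set (img_word v) \<Longrightarrow> good w"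
proof (induct v arbitrary: w c)
  case Nil thus ?case by (simp add: img_word_def good_def)
next
  case (Cons l v)
  have "img_word (l # v) = fmul (img_letter l) (img_word v)" by (simp add: img_word_def)
  with fmul_goodne2[OF img_letter_goodne Cons(1)] Cons(2) show ?case by (auto simp: good_def)
qed

lemma img_good: "(w, c) \<in> set (img U) \<Longrightarrow> good w"
  unfolding img_def fscale_def using img_word_good by auto

lemma Phi_word_nth0: "w \<noteq> [] \<Longrightarrow> Phi_word q w f $ 0 = 0"
  by (cases w; cases "hd w") (auto simp: Pop_def Yop_nth)

lemma pow_ne1: "norm q < 1 \<Longrightarrow> i > 0 \<Longrightarrow> (q::complex) ^ i \<noteq> 1"
proof
  assume "norm q < 1" "i > 0" "q ^ i = 1"
  hence "norm q ^ i < 1" by (simp add: power_less_one_iff)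
  with \<open>q ^ i = 1\<close> show False by (metis norm_one norm_power order_less_irrefl)
qed

lemma key_id:
  fixes x y a b :: complex
  assumes "x \<noteq> 1" "y \<noteq> 1" "x * y \<noteq> 1"
  shows "(a / (1 - x)) * (b / (1 - y)) = (a * (b / (1 - y)) + a / (1 - x) * b - a * b) / (1 - x * y)"
proof -
  have h: "1 - x \<noteq> 0" "1 - y \<noteq> 0" "1 - x * y \<noteq> 0" using assms by auto
  show ?thesis using h by (simp add: divide_simps) (simp add: algebra_simps)
qed

lemma Pop_prod:
  assumes q: "norm q < 1" and f0: "f $ 0 = 0" and g0: "g $ 0 = 0"
  shows "Pop q f * Pop q g = Pop q (f * Pop q g) + Pop q (Pop q f * g) - Pop q (f * g)"
proof (rule fps_ext)
  fix n
  have "(Pop q (f * Pop q g) + Pop q (Pop q f * g) - Pop q (f * g)) $ n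
      = (\<Sum>i=0..n. f $ i * (g $ (n - i) / (1 - q ^ (n - i))) + f $ i / (1 - q ^ i) * g $ (n - i)
           - f $ i * g $ (n - i)) / (1 - q ^ n)"
    by (simp add: Pop_def fps_mult_nth sum.distrib sum_subtractf diff_divide_distrib add_divide_distrib)
  also have "\<dots> = (\<Sum>i=0..n. (f $ i / (1 - q ^ i)) * (g $ (n - i) / (1 - q ^ (n - i))))"
    unfolding sum_divide_distrib
  proof (rule sum.cong[OF refl])
    fix i assume i: "i \<in> {0..n}"
    show "(f $ i * (g $ (n - i) / (1 - q ^ (n - i))) + f $ i / (1 - q ^ i) * g $ (n - i)
           - f $ i * g $ (n - i)) / (1 - q ^ n) = (f $ i / (1 - q ^ i)) * (g $ (n - i) / (1 - q ^ (n - i)))"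
    proof (cases "i = 0 \<or> i = n")
      case True thus ?thesis using f0 g0 by auto
    next
      case False
      hence "q ^ n = q ^ i * q ^ (n - i)" using i by (simp flip: power_add)
      moreover have "q ^ i \<noteq> 1" "q ^ (n - i) \<noteq> 1" "q ^ n \<noteq> 1"
        using False i pow_ne1[OF q] by auto
      ultimately show ?thesis using key_id[of "q ^ i" "q ^ (n - i)"] by simp
    qed
  qed
  also have "\<dots> = (Pop q f * Pop q g) $ n" by (simp add: Pop_def fps_mult_nth)
  finally show "(Pop q f * Pop q g) $ n = (Pop q (f * Pop q g) + Pop q (Pop q f * g) - Pop q (f * g)) $ n"
    by simp
qed

lemma Phi_one_fprefix: "Phi_one q (fprefix x U) = Phi_letter q x (Phi_one q U)"
  by (simp add: Phi_one_op Phi_op_fprefix)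
lemma Phi_one_fscale: "Phi_one q (fscale c U) = fps_const (of_rat c) * Phi_one q U"
  by (simp add: Phi_one_op Phi_op_fscale)
lemma Phi_one_append: "Phi_one q (U @ V) = Phi_one q U + Phi_one q V"
  by (simp add: Phi_one_op)

lemma test1: "good (Pi # u) \<Longrightarrow> u \<noteq> []" by (cases u) (auto simp: good_def)
lemma Phi_one_shuffle_w:
  "norm q < 1 \<Longrightarrow> good u \<Longrightarrow> good v \<Longrightarrow> Phi_one q (shuffle_w u v) = Phi_word q u 1 * Phi_word q v 1"
proof (induct u v rule: shuffle_w.induct)
  case (1 v) thus ?case by (simp add: Phi_one_op)
next
  case (2 a u) thus ?case by (simp add: Phi_one_op)
next
  case (3 u a v)
  have "good u" using 3(3) by (cases u) (auto simp: good_def)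
  thus ?case using 3 by (simp add: Phi_one_fprefix Yop_def mult.assoc)
next
  case (4 u v)
  have "good v" using 4(4) by (cases v) (auto simp: good_def)
  thus ?case using 4 by (simp add: Phi_one_fprefix Yop_def algebra_simps)
next
  case (5 u v)
  have u2: "u \<noteq> []" using 5(5) by (rule test1)
  have v2: "v \<noteq> []" using 5(6) by (rule test1)
  have u: "good u" "u \<noteq> []" using 5(5) u2 by (auto simp: good_def)
  have v: "good v" "v \<noteq> []" using 5(6) v2 by (auto simp: good_def)
  have gPi: "good (Pi # u)" "good (Pi # v)" using 5(5,6) by auto
  have "Phi_one q (shuffle_w (Pi # u) (Pi # v))
      = Pop q (Phi_word q u 1 * Pop q (Phi_word q v 1)) + Pop q (Pop q (Phi_word q u 1) * Phi_word q v 1)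
        - Pop q (Phi_word q u 1 * Phi_word q v 1)"
    using 5(1)[OF 5(4) u(1) gPi(2)] 5(2)[OF 5(4) gPi(1) v(1)] 5(3)[OF 5(4) u(1) v(1)]
    by (simp add: Phi_one_fprefix Phi_one_fscale Phi_one_append neg_one_mult_fps)
  also have "\<dots> = Pop q (Phi_word q u 1) * Pop q (Phi_word q v 1)"
    using Pop_prod[OF 5(4) Phi_word_nth0[OF u(2)] Phi_word_nth0[OF v(2)]] by simp
  finally show ?case by simp
qed


lemma Phi_one_Cons: "Phi_one q ((w, a) # W) = fps_const (of_rat a) * Phi_word q w 1 + Phi_one q W"
  by (simp add: Phi_one_op)
lemma Phi_one_Nil: "Phi_one q [] = 0"
  by (simp add: Phi_one_op)
lemma Phi_one_concat: "Phi_one q (concat Ws) = (\<Sum>W \<leftarrow> Ws. Phi_one q W)"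
  by (simp add: Phi_one_op Phi_op_concat)

lemma shuffle_inner:
  assumes "norm q < 1" "good w" "\<forall>(w', b) \<in> set V. good w'"
  shows "Phi_one q (concat (map (\<lambda>(w', b). fscale (a * b) (shuffle_w w w')) V))
       = fps_const (of_rat a) * Phi_word q w 1 * Phi_one q V"
  using assms(3)
proof (induct V)
  case Nil thus ?case by (simp add: Phi_one_Nil)
next
  case (Cons x V)
  obtain w' b where x: "x = (w', b)" by fastforce
  have "good w'" using Cons(2) x by auto
  hence "Phi_one q (shuffle_w w w') = Phi_word q w 1 * Phi_word q w' 1"
    using Phi_one_shuffle_w assms by blast
  thus ?case using Cons x
    by (simp add: Phi_one_append Phi_one_fscale Phi_one_Cons of_rat_mult algebra_simps
        flip: fps_const_mult)
qed

lemma Phi_one_shuffle: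
  assumes "norm q < 1" "\<forall>(w, a) \<in> set U. good w" "\<forall>(w, a) \<in> set V. good w"
  shows "Phi_one q (shuffle U V) = Phi_one q U * Phi_one q V"
  using assms(2)
proof (induct U)
  case Nil thus ?case by (simp add: shuffle_def bilin_def Phi_one_Nil)
next
  case (Cons x U)
  obtain w a where x: "x = (w, a)" by fastforce
  have "good w" using Cons(2) x by auto
  have "shuffle (x # U) V = concat (map (\<lambda>(w', b). fscale (a * b) (shuffle_w w w')) V) @ shuffle U V"
    by (simp add: shuffle_def bilin_def x)
  hence "Phi_one q (shuffle (x # U) V) = fps_const (of_rat a) * Phi_word q w 1 * Phi_one q V + Phi_one q U * Phi_one q V"
    using Cons shuffle_inner[OF assms(1) \<open>good w\<close> assms(3)] by (simp add: Phi_one_append)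
  thus ?case using x by (simp add: Phi_one_Cons algebra_simps)
qed

definition T :: "complex \<Rightarrow> zword \<Rightarrow> nat \<Rightarrow> complex" where
  "T q w N = (\<Sum>n<N. G q w $ n)"

definition TS :: "complex \<Rightarrow> zword fsum \<Rightarrow> nat \<Rightarrow> complex" where
  "TS q X N = (\<Sum>(w, c) \<leftarrow> X. of_rat c * T q w N)"

lemma T_0[simp]: "T q w 0 = 0" by (simp add: T_def)
lemma T_Nil_Suc[simp]: "T q [] (Suc N) = 1"
  by (simp add: T_def lessThan_Suc_atMost sum.atMost_shift)
lemma T_Cons_Suc: "T q (a # w) (Suc N) = T q (a # w) N + lam q (fst a) (snd a) N * T q w N"
  by (simp add: T_def)

lemma TS_0[simp]: "TS q X 0 = 0" by (induct X) (auto simp: TS_def)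
lemma TS_Nil[simp]: "TS q [] N = 0" by (simp add: TS_def)
lemma TS_Cons[simp]: "TS q ((w, c) # X) N = of_rat c * T q w N + TS q X N" by (simp add: TS_def)
lemma TS_append[simp]: "TS q (X @ Z) N = TS q X N + TS q Z N" by (simp add: TS_def)
lemma TS_fscale: "TS q (fscale c X) N = of_rat c * TS q X N"
  by (induct X) (auto simp: fscale_def of_rat_mult algebra_simps)
lemma TS_concat: "TS q (concat Xs) N = (\<Sum>X \<leftarrow> Xs. TS q X N)"
  by (induct Xs) auto
lemma TS_fprefix_Suc: "TS q (fprefix a X) (Suc N) = TS q (fprefix a X) N + lam q (fst a) (snd a) N * TS q X N"
  by (induct X) (auto simp: fprefix_def T_Cons_Suc algebra_simps)

lemma lam_mult: "t \<le> s \<Longrightarrow> t' \<le> s' \<Longrightarrow> lam q (t + t') (s + s') n = lam q t s n * lam q t' s' n"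
proof -
  assume "t \<le> s" "t' \<le> s'"
  hence "s + s' - (t + t') = (s - t) + (s' - t')" by simp
  thus ?thesis by (simp add: lam_def power_add)
qed

lemma valid_Cons: "valid_zword (a # w) \<longleftrightarrow> fst a \<le> snd a \<and> valid_zword w"
  by (cases a) (simp add: valid_zword_def)

lemma T_stuffle_w: "valid_zword u \<Longrightarrow> valid_zword v \<Longrightarrow> T q u N * T q v N = TS q (stuffle_w u v) N"
proof (induct N arbitrary: u v)
  case 0 thus ?case by simp
next
  case (Suc N)
  show ?case
  proof (cases u)
    case Nil thus ?thesis by simp
  next
    case (Cons a u')
    show ?thesis
    proof (cases v)
      case Nil thus ?thesis using Cons by simp
    next
      case (Cons b v')
      note u = \<open>u = a # u'\<close>
      have va: "fst a \<le> snd a" "valid_zword u'" using Suc(2) u by (auto simp: valid_Cons)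
      have vb: "fst b \<le> snd b" "valid_zword v'" using Suc(3) Cons by (auto simp: valid_Cons)
      have IH1: "T q u' N * T q (b # v') N = TS q (stuffle_w u' (b # v')) N"
        using Suc(1) va vb Suc(3) Cons by blast
      have IH2: "T q (a # u') N * T q v' N = TS q (stuffle_w (a # u') v') N"
        using Suc(1) va vb Suc(2) u by blast
      have IH3: "T q u' N * T q v' N = TS q (stuffle_w u' v') N"
        using Suc(1) va vb by blast
      have IH0: "T q (a # u') N * T q (b # v') N = TS q (stuffle_w (a # u') (b # v')) N"
        using Suc(1) Suc(2,3) u Cons by blast
      have lm: "lam q (fst a + fst b) (snd a + snd b) N = lam q (fst a) (snd a) N * lam q (fst b) (snd b) N"
        using lam_mult va vb by blast
      let ?la = "lam q (fst a) (snd a) N" and ?lb = "lam q (fst b) (snd b) N"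
      have "TS q (stuffle_w u v) (Suc N) = TS q (stuffle_w (a # u') (b # v')) N
          + ?la * TS q (stuffle_w u' (b # v')) N + ?lb * TS q (stuffle_w (a # u') v') N
          + lam q (fst a + fst b) (snd a + snd b) N * TS q (stuffle_w u' v') N"
        using u Cons by (simp add: TS_fprefix_Suc algebra_simps)
      also have "\<dots> = T q (a # u') N * T q (b # v') N + ?la * (T q u' N * T q (b # v') N)
          + ?lb * (T q (a # u') N * T q v' N) + (?la * ?lb) * (T q u' N * T q v' N)"
        by (simp only: IH0 IH1 IH2 IH3 lm)
      also have "\<dots> = T q u (Suc N) * T q v (Suc N)"
        using u Cons by (simp add: T_Cons_Suc algebra_simps)
      finally show ?thesis by simp
    qed
  qed
qed

lemma TS_stuffle_inner:
  assumes "valid_zword w" "\<forall>(w', b) \<in> set V. valid_zword w'"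
  shows "TS q (concat (map (\<lambda>(w', b). fscale (a * b) (stuffle_w w w')) V)) N
       = of_rat a * T q w N * TS q V N"
  using assms(2)
proof (induct V)
  case Nil thus ?case by simp
next
  case (Cons x V)
  obtain w' b where x: "x = (w', b)" by fastforce
  have "valid_zword w'" using Cons(2) x by auto
  hence "TS q (stuffle_w w w') N = T q w N * T q w' N"
    using T_stuffle_w assms by metis
  thus ?case using Cons x
    by (simp add: TS_fscale of_rat_mult algebra_simps)
qed

lemma TS_stuffle:
  assumes "\<forall>(w, a) \<in> set U. valid_zword w" "\<forall>(w, a) \<in> set V. valid_zword w"
  shows "TS q (stuffle U V) N = TS q U N * TS q V N"
  using assms(1)
proof (induct U)
  case Nil thus ?case by (simp add: stuffle_def bilin_def)
next
  case (Cons x U)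
  obtain w a where x: "x = (w, a)" by fastforce
  have "valid_zword w" using Cons(2) x by auto
  have "stuffle (x # U) V = concat (map (\<lambda>(w', b). fscale (a * b) (stuffle_w w w')) V) @ stuffle U V"
    by (simp add: stuffle_def bilin_def x)
  hence "TS q (stuffle (x # U) V) N = of_rat a * T q w N * TS q V N + TS q U N * TS q V N"
    using Cons TS_stuffle_inner[OF \<open>valid_zword w\<close> assms(2)] by simp
  thus ?case using x by (simp add: algebra_simps)
qed


lemma summable_poly_geom: "0 \<le> r \<Longrightarrow> r < 1 \<Longrightarrow> summable (\<lambda>n. real n ^ k * r ^ n)"
proof (induct k arbitrary: r)
  case 0 thus ?case by (simp add: summable_geometric)
next
  case (Suc k)
  define s where "s = sqrt r"
  have s: "0 \<le> s" "s < 1" using Suc(2,3) by (auto simp: s_def)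
  have rs: "r ^ n = s ^ n * s ^ n" for n
    using Suc(2) by (simp add: s_def flip: power_mult_distrib)
  have "(\<lambda>n. real n * s ^ n) \<longlonglongrightarrow> 0"
    using powser_times_n_limit_0[of s] s by simp
  hence ev: "eventually (\<lambda>n. real n * s ^ n < 1) sequentially"
    by (rule order_tendstoD) simp
  show ?case
  proof (rule summable_comparison_test_ev[OF _ Suc(1)[OF s]])
    show "eventually (\<lambda>n. norm (real n ^ Suc k * r ^ n) \<le> real n ^ k * s ^ n) sequentially"
      using ev
    proof eventually_elim
      case (elim n)
      have "norm (real n ^ Suc k * r ^ n) = (real n * s ^ n) * (real n ^ k * s ^ n)"
        using s Suc(2) by (simp add: rs abs_mult)
      also have "\<dots> \<le> 1 * (real n ^ k * s ^ n)"
        using elim s by (intro mult_right_mono) auto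
      finally show ?case by simp
    qed
  qed
qed

definition c0 :: "complex \<Rightarrow> real" where "c0 q = 1 / (1 - norm q)"

lemma c0_ge1: "norm q < 1 \<Longrightarrow> c0 q \<ge> 1"
  by (simp add: c0_def)

lemma norm_1mq: fixes q :: complex assumes "norm q < 1" "n \<ge> 1" shows "norm (1 - q ^ n) \<ge> 1 - norm q"
proof -
  have "norm q ^ n \<le> norm q ^ 1"
    using assms by (intro power_decreasing) auto
  moreover have "norm (1 - q ^ n) \<ge> 1 - norm (q ^ n)"
    using norm_triangle_ineq2[of 1 "q ^ n"] by simp
  ultimately show ?thesis by (simp add: norm_power)
qed

lemma lam_bound:
  assumes q: "norm q < 1" and n: "n \<ge> 1"
  shows "norm (lam q t s n) \<le> c0 q ^ (t + (s - t)) * (norm q ^ n) ^ t"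
proof -
  define d where "d = 1 - q ^ n"
  have e: "1 - norm q > 0" using q by simp
  have dn: "norm d \<ge> 1 - norm q" using norm_1mq[OF q n] by (simp add: d_def)
  hence d0: "d \<noteq> 0" using e by auto
  have inv: "inverse (norm d) \<le> c0 q"
    unfolding c0_def using le_imp_inverse_le[OF dn e] by (simp add: divide_inverse)
  have invp: "inverse (norm d) \<ge> 0" by simp
  have "1 / d - 1 = q ^ n / d" using d0 by (simp add: d_def field_simps)
  hence "lam q t s n = (q ^ n / d) ^ t / d ^ (s - t)" by (simp add: lam_def d_def)
  hence "norm (lam q t s n) = (norm q ^ n * inverse (norm d)) ^ t * inverse (norm d) ^ (s - t)"
    by (simp add: norm_divide norm_power norm_mult field_simps)
  also have "\<dots> \<le> (norm q ^ n * c0 q) ^ t * c0 q ^ (s - t)"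
    using inv invp c0_ge1[OF q] by (intro mult_mono power_mono mult_left_mono) auto
  also have "\<dots> = c0 q ^ (t + (s - t)) * (norm q ^ n) ^ t"
    by (simp add: power_mult_distrib power_add)
  finally show ?thesis .
qed

primrec M :: "complex \<Rightarrow> zword \<Rightarrow> real" where
  "M q [] = 1"
| "M q (a # w) = c0 q ^ (fst a + (snd a - fst a)) * M q w"

lemma M_nonneg: "norm q < 1 \<Longrightarrow> M q w \<ge> 0"
  using c0_ge1[of q] by (induct w) auto

lemma G_Cons_bound_gen:
  assumes q: "norm q < 1"
    and IH: "\<And>m. norm (G q w $ m) \<le> M q w * real m ^ length w"
  shows "norm (G q (a # w) $ n) \<le> c0 q ^ (fst a + (snd a - fst a)) * (norm q ^ n) ^ fst a
            * (M q w * real n ^ Suc (length w))"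
proof (cases "n = 0")
  case True thus ?thesis by simp
next
  case False
  have "norm (\<Sum>m<n. G q w $ m) \<le> (\<Sum>m<n. norm (G q w $ m))" by (rule norm_sum)
  also have "\<dots> \<le> (\<Sum>m<n. M q w * real n ^ length w)"
    using IH M_nonneg[OF q] by (intro sum_mono order_trans[OF IH] mult_left_mono power_mono) auto
  also have "\<dots> = M q w * real n ^ Suc (length w)" by simp
  finally have S: "norm (\<Sum>m<n. G q w $ m) \<le> M q w * real n ^ Suc (length w)" .
  have L: "norm (lam q (fst a) (snd a) n) \<le> c0 q ^ (fst a + (snd a - fst a)) * (norm q ^ n) ^ fst a"
    using lam_bound[OF q] False by simp
  have P: "0 \<le> c0 q ^ (fst a + (snd a - fst a)) * (norm q ^ n) ^ fst a"
    using c0_ge1[OF q] by simp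
  show ?thesis
    using mult_mono[OF L S P norm_ge_zero] by (simp add: norm_mult)
qed

lemma G_bound: "norm q < 1 \<Longrightarrow> norm (G q w $ n) \<le> M q w * real n ^ length w"
proof (induct w arbitrary: n)
  case Nil thus ?case by (simp add: fps_one_nth)
next
  case (Cons a w)
  have "norm (G q (a # w) $ n) \<le> c0 q ^ (fst a + (snd a - fst a)) * (norm q ^ n) ^ fst a
            * (M q w * real n ^ Suc (length w))"
    using G_Cons_bound_gen[OF Cons(2) Cons(1)[OF Cons(2)]] .
  also have "\<dots> \<le> c0 q ^ (fst a + (snd a - fst a)) * 1 * (M q w * real n ^ Suc (length w))"
    using Cons(2) c0_ge1[of q] M_nonneg[OF Cons(2)]
    by (intro mult_right_mono mult_left_mono power_le_one) auto
  finally show ?case by (simp add: mult.assoc)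
qed

lemma G_summable:
  assumes q: "norm q < 1" and a: "fst a \<ge> 1"
  shows "summable (\<lambda>n. norm (G q (a # w) $ n))"
proof (rule summable_comparison_test')
  let ?C = "c0 q ^ (fst a + (snd a - fst a)) * M q w"
  show "summable (\<lambda>n. ?C * (real n ^ Suc (length w) * norm q ^ n))"
    using q by (intro summable_mult summable_poly_geom) auto
  fix n :: nat
  have "norm (G q (a # w) $ n) \<le> c0 q ^ (fst a + (snd a - fst a)) * (norm q ^ n) ^ fst a
            * (M q w * real n ^ Suc (length w))"
    using G_Cons_bound_gen[OF q G_bound[OF q]] .
  also have "\<dots> \<le> c0 q ^ (fst a + (snd a - fst a)) * (norm q ^ n) ^ 1 * (M q w * real n ^ Suc (length w))"
    using q c0_ge1[of q] M_nonneg[OF q] a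
    by (intro mult_right_mono mult_left_mono power_decreasing power_le_one) auto
  finally show "norm (norm (G q (a # w) $ n)) \<le> ?C * (real n ^ Suc (length w) * norm q ^ n)"
    by (simp add: algebra_simps)
qed

definition FS :: "complex \<Rightarrow> zword fsum \<Rightarrow> nat \<Rightarrow> complex" where
  "FS q U n = Phi_one q (img U) $ n"

lemma FS_eq: "FS q U n = (\<Sum>(w, c) \<leftarrow> U. of_rat c * G q w $ n)"
  unfolding FS_def Phi_one_img by (induct U) auto

lemma FS_partial: "(\<Sum>n<N. FS q U n) = TS q U N"
  unfolding FS_eq by (induct U) (auto simp: sum.distrib T_def sum_distrib_left)

lemma FS_summable:
  assumes q: "norm q < 1" and U: "\<forall>(w, a) \<in> set U. w \<noteq> [] \<and> fst (hd w) \<ge> 1"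
  shows "summable (\<lambda>n. norm (FS q U n))"
  using U unfolding FS_eq
proof (induct U)
  case Nil thus ?case by simp
next
  case (Cons x U)
  obtain w c where x: "x = (w, c)" by fastforce
  from Cons(2) x obtain a w' where w: "w = a # w'" "fst a \<ge> 1" by (cases w) auto
  have s1: "summable (\<lambda>n. norm (of_rat c :: complex) * norm (G q w $ n))"
    using G_summable[OF q w(2)] w(1) by (intro summable_mult) auto
  have s2: "summable (\<lambda>n. norm (\<Sum>(w, c) \<leftarrow> U. of_rat c * G q w $ n))"
    using Cons by auto
  show ?case
  proof (rule summable_comparison_test'[OF summable_add[OF s1 s2]])
    fix n
    show "norm (norm (\<Sum>(w, c) \<leftarrow> x # U. of_rat c * G q w $ n))
        \<le> norm (of_rat c :: complex) * norm (G q w $ n) + norm (\<Sum>(w, c) \<leftarrow> U. of_rat c * G q w $ n)"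
      using x by (simp add: norm_triangle_le norm_mult)
  qed
qed


lemma zq_FS: "zq q (img U) = suminf (FS q U)"
  by (simp add: zq_def FS_def[abs_def])

theorem theorem9p2:
  fixes q :: complex and u v :: "zword fsum"
  assumes "norm q < 1" and "u \<in> A0" and "v \<in> A0"
  shows "zq q (img (stuffle u v)) = zq q (shuffle (img u) (img v))
       \<and> zq q (shuffle (img u) (img v)) = zq q (img u) * zq q (img v)"
proof -
  note q = assms(1)
  have hu: "\<forall>(w, a) \<in> set u. w \<noteq> [] \<and> fst (hd w) \<ge> 1" "\<forall>(w, a) \<in> set u. valid_zword w"
    using assms(2) unfolding A0_def by fast+
  have hv: "\<forall>(w, a) \<in> set v. w \<noteq> [] \<and> fst (hd w) \<ge> 1" "\<forall>(w, a) \<in> set v. valid_zword w"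
    using assms(3) unfolding A0_def by fast+
  have su: "summable (\<lambda>n. norm (FS q u n))" using FS_summable[OF q hu(1)] .
  have sv: "summable (\<lambda>n. norm (FS q v n))" using FS_summable[OF q hv(1)] .
  have zu: "zq q (img u) = suminf (FS q u)" by (rule zq_FS)
  have zv: "zq q (img v) = suminf (FS q v)" by (rule zq_FS)
  have "(\<lambda>N. \<Sum>n<N. FS q (stuffle u v) n) = (\<lambda>N. (\<Sum>n<N. FS q u n) * (\<Sum>n<N. FS q v n))"
    unfolding FS_partial TS_stuffle[OF hu(2) hv(2)] ..
  moreover have "(\<lambda>N. (\<Sum>n<N. FS q u n) * (\<Sum>n<N. FS q v n)) \<longlonglongrightarrow> suminf (FS q u) * suminf (FS q v)"
    using summable_norm_cancel[OF su] summable_norm_cancel[OF sv] by (intro tendsto_mult summable_LIMSEQ)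
  ultimately have "FS q (stuffle u v) sums (suminf (FS q u) * suminf (FS q v))"
    unfolding sums_def by simp
  hence st: "zq q (img (stuffle u v)) = zq q (img u) * zq q (img v)"
    unfolding zq_FS zu zv by (rule sums_unique[symmetric])
  have "Phi_one q (shuffle (img u) (img v)) = Phi_one q (img u) * Phi_one q (img v)"
  proof (rule Phi_one_shuffle[OF q])
    show "\<forall>(w, a) \<in> set (img u). good w" using img_good by (metis (mono_tags, lifting) case_prodI2)
    show "\<forall>(w, a) \<in> set (img v). good w" using img_good by (metis (mono_tags, lifting) case_prodI2)
  qed
  hence eq: "(\<lambda>n. Phi_one q (shuffle (img u) (img v)) $ n) = (\<lambda>n. \<Sum>i\<le>n. FS q u i * FS q v (n - i))"
    by (simp add: fps_mult_nth FS_def atLeast0AtMost)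
  have "(\<lambda>n. \<Sum>i\<le>n. FS q u i * FS q v (n - i)) sums (suminf (FS q u) * suminf (FS q v))"
    using Cauchy_product_sums[OF su sv] by simp
  moreover have "zq q (shuffle (img u) (img v)) = (\<Sum>n. \<Sum>i\<le>n. FS q u i * FS q v (n - i))"
    unfolding zq_def eq ..
  ultimately have sh: "zq q (shuffle (img u) (img v)) = zq q (img u) * zq q (img v)"
    unfolding zu zv using sums_unique by metis
  show ?thesis using st sh by simp
qed

end
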